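(* Let $\mathbf L\in\mathbb R_+^{n\times k}$ be such that all columns of $\mathbf L$ can be obtained from one another by permuting entries, i.e. for all $t_1,t_2\in[k]$ there exists a permutation $\sigma$ of $[n]$ with $\ell_{y,t_2}=\ell_{\sigma(y),t_1}$ for all $y\in[n]$. Then $\mathrm{CCdim}(\mathbf L)\ge\operatorname{affdim}(\mathbf L)-1$.
   Context: Notation: $[m]=\{1,\dots,m\}$; $\Delta_n=\{\mathbf p\in\mathbb R_+^n:\sum_i p_i=1\}$. A loss matrix $\mathbf L\in\mathbb R_+^{n\times k}$ has entries $\ell_{yt}$ and columns $\boldsymbol\ell_t$, $t\in[k]$; $\operatorname{affdim}(\mathbf L)$ is the dimension of the affine hull of $\{\boldsymbol\ell_1,\dots,\boldsymbol\ell_k\}$. Standing assumption: for each $t\in[k]$ there is $\mathbf q\in\Delta_n$ with $\operatorname{argmin}_{t'}\mathbf q^\top\boldsymbol\ell_{t'}=\{t\}$. A surrogate loss $\boldsymbol\psi:\mathcal C\to\mathbb R_+^n$ ($\mathcal C\subseteq\mathbb R^d$ convex) is $\mathbf L$-calibrated if there is $\mathrm{pred}:\mathcal C\to[k]$ such that for all $\mathbf q\in\Delta_n$: $\inf_{\mathbf u\in\mathcal C:\mathrm{pred}(\mathbf u)\notin\operatorname{argmin}_t\mathbf q^\top\boldsymbol\ell_t}\mathbf q^\top\boldsymbol\psi(\mathbf u)>\inf_{\mathbf u\in\mathcal C}\mathbf q^\top\boldsymbol\psi(\mathbf u)$. $\mathrm{CCdim}(\mathbf L)$ is the smallest $d\in\mathbb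 Z_+$ for which there exist a convex set $\mathcal C\subseteq\mathbb R^d$ and a convex (componentwise convex) $\mathbf L$-calibrated surrogate $\boldsymbol\psi:\mathcal C\to\mathbb R_+^n$ ($\infty$ if none exists). *)

theory Defs
  imports "HOL-Analysis.Analysis" "HOL-Library.Extended_Nat"
begin

text \<open>The outcome space [n] is a finite type 'n (n = CARD('n)), so that
  vectors in R^n are elements of real^'n. A loss matrix with k columns is a function
  L :: nat => real^'n, where column t (for t in [k] = {1..k}) is L t, and the entry
  l_{y t} is L t $ y.  Points of R^d (d varies inside CCdim) are represented as
  functions u :: nat => real vanishing outside {..<d}.\<close>

definition prob_simplex :: "(real^'n) set" where
  "prob_simplex = {q. (\<forall>y. 0 \<le> q $ y) \<and> (\<Sum>y\<in>UNIV. q $ y) = 1}"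

definition argmin_loss :: "nat \<Rightarrow> (nat \<Rightarrow> real^'n) \<Rightarrow> real^'n \<Rightarrow> nat set" where
  "argmin_loss k L q = {t\<in>{1..k}. \<forall>t'\<in>{1..k}. q \<bullet> L t \<le> q \<bullet> L t'}"

definition loss_matrix :: "nat \<Rightarrow> (nat \<Rightarrow> real^'n) \<Rightarrow> bool" where
  "loss_matrix k L \<longleftrightarrow> (\<forall>t\<in>{1..k}. \<forall>y. 0 \<le> L t $ y)"

definition standing_assumption :: "nat \<Rightarrow> (nat \<Rightarrow> real^'n) \<Rightarrow> bool" where
  "standing_assumption k L \<longleftrightarrow>
     (\<forall>t\<in>{1..k}. \<exists>q\<in>prob_simplex. argmin_loss k L q = {t})"

definition affdim :: "nat \<Rightarrow> (nat \<Rightarrow> real^'n) \<Rightarrow> int" where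
  "affdim k L = aff_dim (L ` {1..k})"

definition convex_set_in :: "nat \<Rightarrow> (nat \<Rightarrow> real) set \<Rightarrow> bool" where
  "convex_set_in d C \<longleftrightarrow> (\<forall>u\<in>C. \<forall>i\<ge>d. u i = 0) \<and>
     (\<forall>u\<in>C. \<forall>v\<in>C. \<forall>\<theta>::real. 0 \<le> \<theta> \<and> \<theta> \<le> 1 \<longrightarrow> (\<lambda>i. \<theta> * u i + (1 - \<theta>) * v i) \<in> C)"

definition convex_surrogate :: "(nat \<Rightarrow> real) set \<Rightarrow> ((nat \<Rightarrow> real) \<Rightarrow> real^'n) \<Rightarrow> bool" where
  "convex_surrogate C \<psi> \<longleftrightarrow> (\<forall>u\<in>C. \<forall>y. 0 \<le> \<psi> u $ y) \<and>
     (\<forall>y. \<forall>u\<in>C. \<forall>v\<in>C. \<forall>\<theta>::real. 0 \<le> \<theta> \<and> \<theta> \<le> 1 \<longrightarrow>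
        \<psi> (\<lambda>i. \<theta> * u i + (1 - \<theta>) * v i) $ y \<le> \<theta> * \<psi> u $ y + (1 - \<theta>) * \<psi> v $ y)"

text \<open>L-calibration; infima are taken in the extended reals (inf of the empty set is +infinity).\<close>
definition calibrated :: "nat \<Rightarrow> (nat \<Rightarrow> real^'n) \<Rightarrow> (nat \<Rightarrow> real) set \<Rightarrow> ((nat \<Rightarrow> real) \<Rightarrow> real^'n) \<Rightarrow> bool" where
  "calibrated k L C \<psi> \<longleftrightarrow> (\<exists>pred :: (nat \<Rightarrow> real) \<Rightarrow> nat. (\<forall>u\<in>C. pred u \<in> {1..k}) \<and>
     (\<forall>q\<in>prob_simplex.
        (INF u\<in>{u\<in>C. pred u \<notin> argmin_loss k L q}. ereal (q \<bullet> \<psi> u))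
          > (INF u\<in>C. ereal (q \<bullet> \<psi> u))))"

definition CC_admissible :: "nat \<Rightarrow> (nat \<Rightarrow> real^'n) \<Rightarrow> nat \<Rightarrow> bool" where
  "CC_admissible k L d \<longleftrightarrow> (\<exists>C (\<psi> :: (nat \<Rightarrow> real) \<Rightarrow> real^'n).
      convex_set_in d C \<and> convex_surrogate C \<psi> \<and> calibrated k L C \<psi>)"

definition CCdim :: "nat \<Rightarrow> (nat \<Rightarrow> real^'n) \<Rightarrow> enat" where
  "CCdim k L = (if \<exists>d. CC_admissible k L d then enat (LEAST d. CC_admissible k L d) else \<infinity>)"

end

theory Submission
  imports Defs
begin

lemma ri_zero:
  fixes C :: "'a::euclidean_space set"
  assumes u: "u \<in> rel_interior C" and g: "g \<in> span ((\<lambda>x. x - u) ` C)"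
    and ge: "\<forall>c\<in>C. g \<bullet> (c - u) \<ge> 0"
  shows "g = 0"
proof (rule ccontr)
  assume gn: "g \<noteq> 0"
  from u obtain e where e: "e > 0" "cball u e \<inter> affine hull C \<subseteq> C" and uC: "u \<in> C"
    by (auto simp: mem_rel_interior_cball)
  define c where "c = u - (e / norm g) *\<^sub>R g"
  have "dist u c \<le> e" using e gn by (simp add: c_def dist_norm)
  moreover have "c \<in> affine hull C"
  proof -
    have "(\<lambda>x. x - u) ` C = (\<lambda>x. - u + x) ` C" by auto
    hence "- (e / norm g) *\<^sub>R g \<in> span ((\<lambda>x. - u + x) ` C)"
      using g by (metis span_mul scaleR_minus_left)
    hence "c \<in> (\<lambda>x. u + x) ` span ((\<lambda>x. - u + x) ` C)"
      by (force simp: c_def)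
    thus ?thesis using affine_hull_insert_span_gen[of u C] uC by (simp add: insert_absorb)
  qed
  ultimately have "c \<in> C" using e by auto
  hence "g \<bullet> (c - u) \<ge> 0" using ge by auto
  moreover have "g \<bullet> (c - u) = - (e / norm g) * (g \<bullet> g)" by (simp add: c_def)
  moreover have "g \<bullet> g > 0" using gn by simp
  moreover have "e / norm g > 0" using e gn by simp
  ultimately show False using mult_pos_pos[of "e / norm g" "g \<bullet> g"] by linarith
qed

lemma sep_part:
  fixes C :: "'a::euclidean_space set" and \<psi> :: "'a \<Rightarrow> real^'n"
  assumes convC: "convex C"
    and cvx: "\<forall>y. \<forall>a\<in>C. \<forall>b\<in>C. \<forall>\<theta>. 0 \<le> \<theta> \<and> \<theta> \<le> 1 \<longrightarrow>
       \<psi> (\<theta> *\<^sub>R a + (1-\<theta>) *\<^sub>R b) $ y \<le> \<theta> * \<psi> a $ y + (1-\<theta>) * \<psi> b $ y"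
    and u: "u \<in> rel_interior C"
    and mu: "\<forall>c\<in>C. \<mu> \<le> (\<Sum>y\<in>UNIV. \<psi> c $ y)"
  shows "\<exists>B::'a^'n. (\<forall>y. B$y \<in> span ((\<lambda>x. x - u) ` C)) \<and>
     (\<forall>x w. (\<forall>y. x$y \<in> C) \<longrightarrow> w \<in> C \<longrightarrow> (\<Sum>y\<in>UNIV. B$y \<bullet> (x$y - w)) + (\<Sum>y\<in>UNIV. \<psi> (x$y) $ y) \<ge> \<mu>)"
proof -
  define G where "G x = (\<Sum>y\<in>UNIV. \<psi> (x$y) $ y)" for x :: "'a^'n"
  define H where "H = {(\<chi> y. x$y - w, s) | x w s. (\<forall>y. x$y \<in> C) \<and> w \<in> C \<and> G x < s}"
  define z where "z = (0::'a^'n, \<mu>)"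
  have uC: "u \<in> C" using u rel_interior_subset by auto
  have convH: "convex H"
    unfolding convex_def
  proof (intro ballI allI impI)
    fix h1 h2 and t1 t2 :: real
    assume h1: "h1 \<in> H" and h2: "h2 \<in> H" and t: "0 \<le> t1" "0 \<le> t2" "t1 + t2 = 1"
    from h1 obtain x1 w1 s1 where 1: "h1 = (\<chi> y. x1$y - w1, s1)" "\<forall>y. x1$y \<in> C" "w1 \<in> C" "G x1 < s1"
      unfolding H_def by auto
    from h2 obtain x2 w2 s2 where 2: "h2 = (\<chi> y. x2$y - w2, s2)" "\<forall>y. x2$y \<in> C" "w2 \<in> C" "G x2 < s2"
      unfolding H_def by auto
    define x where "x = t1 *\<^sub>R x1 + t2 *\<^sub>R x2"
    define w where "w = t1 *\<^sub>R w1 + t2 *\<^sub>R w2"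
    have xC: "\<forall>y. x$y \<in> C" using 1 2 t convC unfolding x_def convex_def by auto
    have wC: "w \<in> C" using 1 2 t convC unfolding w_def convex_def by auto
    have "G x \<le> t1 * G x1 + t2 * G x2"
    proof -
      have "G x = (\<Sum>y\<in>UNIV. \<psi> (t1 *\<^sub>R x1$y + (1 - t1) *\<^sub>R x2$y) $ y)"
        unfolding G_def x_def using t by (simp add: eq_diff_eq[symmetric] add.commute)
      also have "\<dots> \<le> (\<Sum>y\<in>UNIV. t1 * \<psi> (x1$y) $ y + (1-t1) * \<psi> (x2$y) $ y)"
        apply (rule sum_mono) using cvx 1 2 t by auto
      also have "\<dots> = t1 * G x1 + t2 * G x2"
        unfolding G_def using t by (simp add: sum.distrib sum_distrib_left eq_diff_eq[symmetric] add.commute)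
      finally show ?thesis .
    qed
    also have "\<dots> < t1 * s1 + t2 * s2"
    proof (cases "t1 = 0")
      case True thus ?thesis using t 2 by simp
    next
      case False
      hence "t1 * G x1 < t1 * s1" using t 1 by simp
      moreover have "t2 * G x2 \<le> t2 * s2" using t 2 by (simp add: mult_left_mono)
      ultimately show ?thesis by linarith
    qed
    finally have "G x < t1 * s1 + t2 * s2" .
    moreover have "t1 *\<^sub>R h1 + t2 *\<^sub>R h2 = (\<chi> y. x$y - w, t1 * s1 + t2 * s2)"
      unfolding 1 2 x_def w_def using t
      by (simp add: vec_eq_iff algebra_simps scaleR_add_right[symmetric] del: scaleR_add_right)
    ultimately show "t1 *\<^sub>R h1 + t2 *\<^sub>R h2 \<in> H" unfolding H_def mem_Collect_eq
      by (intro exI[of _ x] exI[of _ w] exI[of _ "t1 * s1 + t2 * s2"]) (use xC wC in auto)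
  qed
  have zH: "z \<notin> H"
  proof
    assume "z \<in> H"
    then obtain x w s where "z = (\<chi> y. x$y - w, s)" "\<forall>y. x$y \<in> C" "w \<in> C" "G x < s"
      unfolding H_def by auto
    hence "\<forall>y. x$y = w" "s = \<mu>" unfolding z_def by (auto simp: vec_eq_iff)
    hence "G x = (\<Sum>y\<in>UNIV. \<psi> w $ y)" unfolding G_def by simp
    thus False using mu \<open>w \<in> C\<close> \<open>G x < s\<close> \<open>s = \<mu>\<close> by force
  qed
  have Hne: "H \<noteq> {}"
  proof -
    have "\<forall>y. (\<chi> y. u)$y \<in> C" using uC by simp
    hence "((\<chi> y. (\<chi> y. u)$y - u), G (\<chi> y. u) + 1) \<in> H" unfolding H_def mem_Collect_eq
      by (intro exI[of _ "\<chi> y. u"] exI[of _ u] exI[of _ "G (\<chi> y. u) + 1"]) (use uC in auto)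
    thus ?thesis by auto
  qed
  obtain a b where ahull: "z + a \<in> affine hull (insert z H)" and an: "a \<noteq> 0"
     and az: "a \<bullet> z \<le> b" and aH: "\<And>h. h \<in> H \<Longrightarrow> a \<bullet> h \<ge> b"
    using separating_hyperplane_set_point_inaff[OF convH Hne zH] by blast
  obtain A \<beta> where a: "a = (A, \<beta>)" by (cases a)
  have ineq: "(\<Sum>y\<in>UNIV. A$y \<bullet> (x$y - w)) + \<beta> * s \<ge> \<beta> * \<mu>"
    if "\<forall>y. x$y \<in> C" "w \<in> C" "G x < s" for x w s
  proof -
    have "(\<chi> y. x$y - w, s) \<in> H" unfolding H_def mem_Collect_eq
      by (intro exI[of _ x] exI[of _ w] exI[of _ s]) (use that in auto)
    hence "a \<bullet> (\<chi> y. x$y - w, s) \<ge> a \<bullet> z" using aH az by force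
    thus ?thesis unfolding a z_def by (simp add: inner_vec_def)
  qed
  define S where "S = span ((\<lambda>x. x - u) ` C)"
  have AS: "\<forall>y. A$y \<in> S"
  proof -
    have "a \<in> span ((\<lambda>x. - z + x) ` H)"
      using ahull unfolding affine_hull_insert_span_gen by auto
    hence "fst a \<in> fst ` span ((\<lambda>x. - z + x) ` H)" by blast
    hence "A \<in> span (fst ` (\<lambda>x. - z + x) ` H)"
      using real_vector.linear_span_image[OF linear_fst] a by auto
    moreover have "subspace {Z::'a^'n. \<forall>y. Z$y \<in> S}"
      unfolding subspace_def S_def by (auto intro: span_add span_scale span_zero)
    moreover have "fst ` (\<lambda>x. - z + x) ` H \<subseteq> {Z::'a^'n. \<forall>y. Z$y \<in> S}"
    proof
      fix Z assume "Z \<in> fst ` (\<lambda>x. - z + x) ` H"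
      then obtain x w s where "Z = (\<chi> y. x$y - w)" "\<forall>y. x$y \<in> C" "w \<in> C"
        unfolding H_def z_def by auto
      moreover have "x$y - w \<in> S" for y
      proof -
        have "x$y - u \<in> S" "w - u \<in> S" unfolding S_def
          using \<open>\<forall>y. x$y \<in> C\<close> \<open>w \<in> C\<close> by (auto intro: span_base)
        hence "(x$y - u) - (w - u) \<in> S" unfolding S_def by (rule span_diff)
        thus ?thesis by simp
      qed
      ultimately show "Z \<in> {Z. \<forall>y. Z$y \<in> S}" by simp
    qed
    ultimately have "A \<in> {Z::'a^'n. \<forall>y. Z$y \<in> S}"
      using span_minimal by blast
    thus ?thesis by auto
  qed
  have "\<beta> \<ge> 0"
  proof (rule ccontr)
    assume bn: "\<not> \<beta> \<ge> 0"
    define x :: "'a^'n" where "x = (\<chi> y. u)"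
    define K where "K = (\<Sum>y\<in>UNIV. A$y \<bullet> (x$y - u)) + \<beta> * (G x + 1) - \<beta> * \<mu>"
    define r where "r = (\<bar>K\<bar> + 1) / (- \<beta>)"
    have r: "r > 0" using bn unfolding r_def
      by (intro divide_pos_pos) auto
    have "(\<Sum>y\<in>UNIV. A$y \<bullet> (x$y - u)) + \<beta> * (G x + 1 + r) \<ge> \<beta> * \<mu>"
      by (rule ineq) (use uC r in \<open>auto simp: x_def\<close>)
    hence "K + \<beta> * r \<ge> 0" unfolding K_def by (simp add: algebra_simps)
    moreover have "\<beta> * r = - (\<bar>K\<bar> + 1)" using bn by (simp add: r_def)
    ultimately show False by linarith
  qed
  moreover have "\<beta> \<noteq> 0"
  proof
    assume b0: "\<beta> = 0"
    have "A$y = 0" for y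
    proof -
      have "A$y \<bullet> (c - u) \<ge> 0" if cC: "c \<in> C" for c
      proof -
        define x :: "'a^'n" where "x = (\<chi> y'. if y' = y then c else u)"
        have "(\<Sum>y'\<in>UNIV. A$y' \<bullet> (x$y' - u)) + \<beta> * (G x + 1) \<ge> \<beta> * \<mu>"
          by (rule ineq) (use uC cC in \<open>auto simp: x_def\<close>)
        moreover have "(\<Sum>y'\<in>UNIV. A$y' \<bullet> (x$y' - u)) = A$y \<bullet> (c - u)"
        proof -
          have "(\<Sum>y'\<in>UNIV. A$y' \<bullet> (x$y' - u)) = (\<Sum>y'\<in>UNIV. if y' = y then A$y \<bullet> (c - u) else 0)"
            by (rule sum.cong) (auto simp: x_def)
          thus ?thesis by simp
        qed
        ultimately show ?thesis using b0 by simp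
      qed
      thus ?thesis using ri_zero[OF u] AS unfolding S_def by blast
    qed
    hence "A = 0" by (simp add: vec_eq_iff)
    thus False using an a b0 by (simp add: zero_prod_def)
  qed
  ultimately have bpos: "\<beta> > 0" by simp
  define B where "B = (1/\<beta>) *\<^sub>R A"
  have "(\<Sum>y\<in>UNIV. B$y \<bullet> (x$y - w)) + G x \<ge> \<mu>"
    if xC: "\<forall>y. x$y \<in> C" and wC: "w \<in> C" for x w
  proof -
    define P where "P = (\<Sum>y\<in>UNIV. B$y \<bullet> (x$y - w))"
    have PA: "(\<Sum>y\<in>UNIV. A$y \<bullet> (x$y - w)) = \<beta> * P"
      unfolding P_def B_def using bpos by (simp add: sum_distrib_left)
    have "P + G x + r \<ge> \<mu>" if r: "r > 0" for r
    proof -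
      have "\<beta> * P + \<beta> * (G x + r) \<ge> \<beta> * \<mu>"
        using ineq[OF xC wC, of "G x + r"] r PA by simp
      hence "\<beta> * (P + G x + r) \<ge> \<beta> * \<mu>" by (simp add: algebra_simps)
      thus ?thesis using bpos by simp
    qed
    hence "P + G x \<ge> \<mu>"
      by (metis add.commute add_le_imp_le_right field_le_epsilon)
    thus ?thesis unfolding P_def G_def .
  qed
  moreover have "\<forall>y. B$y \<in> span ((\<lambda>x. x - u) ` C)"
    using AS unfolding B_def S_def by (simp add: span_mul)
  ultimately show ?thesis unfolding G_def by blast
qed

lemma key:
  fixes C :: "'a::euclidean_space set" and \<psi> :: "'a \<Rightarrow> real^'n" and V :: "(real^'n) set"
    and Sd :: "'a set"
  assumes convC: "convex C" and ne: "C \<noteq> {}"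
    and nonneg: "\<forall>x\<in>C. \<forall>y. 0 \<le> \<psi> x $ y"
    and cvx: "\<forall>y. \<forall>a\<in>C. \<forall>b\<in>C. \<forall>\<theta>. 0 \<le> \<theta> \<and> \<theta> \<le> 1 \<longrightarrow>
       \<psi> (\<theta> *\<^sub>R a + (1-\<theta>) *\<^sub>R b) $ y \<le> \<theta> * \<psi> a $ y + (1-\<theta>) * \<psi> b $ y"
    and sub: "subspace Sd" "C \<subseteq> Sd" and subV: "subspace V" and dimlt: "dim Sd < dim V"
    and sum0: "\<forall>v\<in>V. (\<Sum>y\<in>UNIV. v$y) = 0"
    and mulow: "\<forall>c\<in>C. \<mu> \<le> (\<Sum>y\<in>UNIV. \<psi> c $ y)"
    and muinf: "\<forall>e>0. \<exists>c\<in>C. (\<Sum>y\<in>UNIV. \<psi> c $ y) < \<mu> + e"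
    and eps: "\<epsilon> > 0"
  shows "\<exists>u\<in>C. \<exists>v\<in>V. norm v = 1 \<and> (\<Sum>y\<in>UNIV. \<psi> u $ y) \<le> \<mu> + \<epsilon> \<and>
     (\<forall>t. (\<forall>y. 0 \<le> 1 / real CARD('n) + t * v$y) \<longrightarrow>
        (\<forall>u'\<in>C. (\<chi> y. 1 / real CARD('n) + t * v$y) \<bullet> \<psi> u
              \<le> (\<chi> y. 1 / real CARD('n) + t * v$y) \<bullet> \<psi> u' + 2 * \<epsilon>))"
proof -
  define F where "F x = (\<Sum>y\<in>UNIV. \<psi> x $ y)" for x
  obtain c where c: "c \<in> rel_interior C"
    using rel_interior_eq_empty[OF convC] ne by blast
  have cC: "c \<in> C" using c rel_interior_subset by auto
  obtain u0 where u0: "u0 \<in> C" "F u0 < \<mu> + \<epsilon>/2" using muinf eps unfolding F_def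
    by (metis half_gt_zero)
  have Fnn: "F x \<ge> 0" if "x \<in> C" for x unfolding F_def using nonneg that by (simp add: sum_nonneg)
  define \<theta> where "\<theta> = min 1 (\<epsilon> / (2 * (F c + 1)))"
  have th: "0 < \<theta>" "\<theta> \<le> 1" unfolding \<theta>_def using eps Fnn[OF cC] by auto
  define u where "u = u0 - \<theta> *\<^sub>R (u0 - c)"
  have uri: "u \<in> rel_interior C" unfolding u_def
    by (rule rel_interior_convex_shrink[OF convC c u0(1) th])
  have uC: "u \<in> C" using uri rel_interior_subset by auto
  have "F u \<le> \<theta> * F c + (1 - \<theta>) * F u0"
  proof -
    have "u = \<theta> *\<^sub>R c + (1 - \<theta>) *\<^sub>R u0" unfolding u_def by (simp add: algebra_simps)
    hence "F u = (\<Sum>y\<in>UNIV. \<psi> (\<theta> *\<^sub>R c + (1 - \<theta>) *\<^sub>R u0) $ y)" unfolding F_def by simp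
    also have "\<dots> \<le> (\<Sum>y\<in>UNIV. \<theta> * \<psi> c $ y + (1 - \<theta>) * \<psi> u0 $ y)"
      by (rule sum_mono) (use cvx cC u0 th in auto)
    also have "\<dots> = \<theta> * F c + (1 - \<theta>) * F u0" unfolding F_def
      by (simp add: sum.distrib sum_distrib_left)
    finally show ?thesis .
  qed
  moreover have "(1 - \<theta>) * F u0 \<le> F u0" using th Fnn[OF u0(1)] by (simp add: mult_left_le_one_le)
  moreover have "\<theta> * F c \<le> \<epsilon>/2"
  proof -
    have "\<theta> * F c \<le> (\<epsilon> / (2 * (F c + 1))) * F c"
      using Fnn[OF cC] by (intro mult_right_mono) (auto simp: \<theta>_def)
    also have "\<dots> = (\<epsilon>/2) * (F c / (F c + 1))" by (simp add: field_simps)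
    also have "\<dots> \<le> (\<epsilon>/2) * 1"
      using Fnn[OF cC] eps by (intro mult_left_mono) auto
    finally show ?thesis by simp
  qed
  ultimately have Fu: "F u \<le> \<mu> + \<epsilon>" using u0 by linarith
  define E where "E = F u - \<mu>"
  have E: "0 \<le> E" "E \<le> \<epsilon>" using Fu mulow uC unfolding E_def F_def by auto
  obtain B :: "'a^'n" where Bspan: "\<forall>y. B$y \<in> span ((\<lambda>x. x - u) ` C)"
    and Bineq: "\<And>x w. \<forall>y. x$y \<in> C \<Longrightarrow> w \<in> C \<Longrightarrow>
        (\<Sum>y\<in>UNIV. B$y \<bullet> (x$y - w)) + (\<Sum>y\<in>UNIV. \<psi> (x$y) $ y) \<ge> \<mu>"
    using sep_part[OF convC cvx uri mulow] by blast
  have ci: "\<psi> c' $ y \<ge> \<psi> u $ y - B$y \<bullet> (c' - u) - E" if c'C: "c' \<in> C" for c' y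
  proof -
    define x :: "'a^'n" where "x = (\<chi> y'. if y' = y then c' else u)"
    have "(\<Sum>y'\<in>UNIV. B$y' \<bullet> (x$y' - u)) + (\<Sum>y'\<in>UNIV. \<psi> (x$y') $ y') \<ge> \<mu>"
      by (rule Bineq) (use uC c'C in \<open>auto simp: x_def\<close>)
    moreover have "(\<Sum>y'\<in>UNIV. B$y' \<bullet> (x$y' - u)) = (\<Sum>y'\<in>UNIV. if y' = y then B$y \<bullet> (c' - u) else 0)"
      by (rule sum.cong) (auto simp: x_def)
    moreover have "(\<Sum>y'\<in>UNIV. \<psi> (x$y') $ y') = (\<Sum>y'\<in>UNIV. \<psi> u $ y' + (if y' = y then \<psi> c' $ y - \<psi> u $ y else 0))"
      by (rule sum.cong) (auto simp: x_def)
    ultimately show ?thesis unfolding E_def F_def by (simp add: sum.distrib)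
  qed
  have cii: "(\<Sum>y\<in>UNIV. B$y) \<bullet> (c' - u) \<le> E" if c'C: "c' \<in> C" for c'
  proof -
    define x :: "'a^'n" where "x = (\<chi> y'. u)"
    have "(\<Sum>y'\<in>UNIV. B$y' \<bullet> (x$y' - c')) + (\<Sum>y'\<in>UNIV. \<psi> (x$y') $ y') \<ge> \<mu>"
      by (rule Bineq) (use uC c'C in \<open>auto simp: x_def\<close>)
    moreover have "(\<Sum>y'\<in>UNIV. B$y' \<bullet> (x$y' - c')) = - ((\<Sum>y\<in>UNIV. B$y) \<bullet> (c' - u))"
      by (simp add: x_def inner_sum_left sum_negf[symmetric] inner_diff_right sum_subtractf)
    ultimately show ?thesis unfolding E_def F_def x_def by simp
  qed
  define T where "T v = (\<Sum>y\<in>UNIV. v$y *\<^sub>R B$y)" for v :: "real^'n"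
  have linT: "linear T" unfolding T_def
    by (rule linearI) (simp_all add: sum.distrib scaleR_add_left scaleR_sum_right)
  have BSd: "B$y \<in> Sd" for y
  proof -
    have "(\<lambda>x. x - u) ` C \<subseteq> Sd" using sub uC by (auto intro: subspace_diff)
    hence "span ((\<lambda>x. x - u) ` C) \<subseteq> Sd" using sub(1) by (simp add: span_minimal)
    thus ?thesis using Bspan by auto
  qed
  have TV: "T ` V \<subseteq> Sd" unfolding T_def using BSd sub(1)
    by (auto intro!: subspace_sum subspace_scale)
  have "\<not> inj_on T (span V)"
  proof
    assume "inj_on T (span V)"
    hence "dim (T ` V) = dim V" by (rule dim_image_eq[OF linT])
    moreover have "dim (T ` V) \<le> dim Sd" using TV by (rule dim_subset)
    ultimately show False using dimlt by simp
  qed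
  then obtain v1 v2 where v12: "v1 \<in> V" "v2 \<in> V" "v1 \<noteq> v2" "T v1 = T v2"
    using subV span_eq_iff[of V] unfolding inj_on_def by metis
  define v0 where "v0 = v1 - v2"
  have v0: "v0 \<in> V" "v0 \<noteq> 0" "T v0 = 0"
    using v12 subV unfolding v0_def by (auto simp: subspace_diff linear_diff[OF linT])
  define v where "v = (1 / norm v0) *\<^sub>R v0"
  have v: "v \<in> V" "norm v = 1" "T v = 0"
    using v0 subV unfolding v_def by (auto simp: subspace_scale linear_cmul[OF linT])
  have "(\<forall>t. (\<forall>y. 0 \<le> 1 / real CARD('n) + t * v$y) \<longrightarrow>
        (\<forall>u'\<in>C. (\<chi> y. 1 / real CARD('n) + t * v$y) \<bullet> \<psi> u
              \<le> (\<chi> y. 1 / real CARD('n) + t * v$y) \<bullet> \<psi> u' + 2 * \<epsilon>))"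
  proof (intro allI impI ballI)
    fix t u' assume qnn: "\<forall>y. 0 \<le> 1 / real CARD('n) + t * v$y" and u'C: "u' \<in> C"
    define N where "N = real CARD('n)"
    have N: "N \<ge> 1" unfolding N_def by simp
    define q :: "real^'n" where "q = (\<chi> y. 1 / N + t * v$y)"
    have sq: "(\<Sum>y\<in>UNIV. q$y) = 1"
      using sum0 v N by (simp add: q_def sum.distrib N_def sum_distrib_left[symmetric])
    have qB: "(\<Sum>y\<in>UNIV. q$y *\<^sub>R B$y) = (1/N) *\<^sub>R (\<Sum>y\<in>UNIV. B$y)"
    proof -
      have "(\<Sum>y\<in>UNIV. q$y *\<^sub>R B$y) = (1/N) *\<^sub>R (\<Sum>y\<in>UNIV. B$y) + t *\<^sub>R T v"
        by (simp add: q_def T_def scaleR_add_left sum.distrib scaleR_sum_right)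
      thus ?thesis using v by simp
    qed
    have "q \<bullet> \<psi> u' = (\<Sum>y\<in>UNIV. q$y * \<psi> u' $ y)" by (simp add: inner_vec_def)
    also have "\<dots> \<ge> (\<Sum>y\<in>UNIV. q$y * (\<psi> u $ y - B$y \<bullet> (u' - u) - E))"
      by (rule sum_mono, rule mult_left_mono) (use ci[OF u'C] qnn in \<open>auto simp: q_def N_def\<close>)
    moreover have "(\<Sum>y\<in>UNIV. q$y * (\<psi> u $ y - B$y \<bullet> (u' - u) - E))
        = q \<bullet> \<psi> u - (\<Sum>y\<in>UNIV. q$y *\<^sub>R B$y) \<bullet> (u' - u) - E * (\<Sum>y\<in>UNIV. q$y)"
      by (simp add: inner_vec_def algebra_simps sum_subtractf sum_distrib_left inner_sum_left sum.distrib)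
    moreover have "(\<Sum>y\<in>UNIV. q$y *\<^sub>R B$y) \<bullet> (u' - u) \<le> E"
    proof -
      have "(\<Sum>y\<in>UNIV. q$y *\<^sub>R B$y) \<bullet> (u' - u) = (1/N) * ((\<Sum>y\<in>UNIV. B$y) \<bullet> (u' - u))"
        using qB by simp
      also have "\<dots> \<le> (1/N) * E" using cii[OF u'C] N by (intro mult_left_mono) auto
      also have "\<dots> \<le> E" using N E by (simp add: divide_le_eq mult_le_cancel_left1)
      finally show ?thesis .
    qed
    moreover have "E * (\<Sum>y\<in>UNIV. q$y) = E" using sq by simp
    ultimately have "q \<bullet> \<psi> u' \<ge> q \<bullet> \<psi> u - 2 * E" by linarith
    thus "(\<chi> y. 1 / real CARD('n) + t * v$y) \<bullet> \<psi> u
              \<le> (\<chi> y. 1 / real CARD('n) + t * v$y) \<bullet> \<psi> u' + 2 * \<epsilon>"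
      using E unfolding q_def N_def by linarith
  qed
  thus ?thesis using uC v Fu unfolding F_def by blast
qed

lemma cal_threshold:
  fixes f :: "'b \<Rightarrow> real"
  assumes "(INF u\<in>C. ereal (f u)) < (INF u\<in>{u\<in>C. P u}. ereal (f u))"
  shows "\<exists>r. (\<exists>u0\<in>C. f u0 < r) \<and> (\<forall>u\<in>C. f u < r \<longrightarrow> \<not> P u)"
proof -
  obtain z where z: "(INF u\<in>C. ereal (f u)) < ereal z" "ereal z < (INF u\<in>{u\<in>C. P u}. ereal (f u))"
    using ereal_dense2[OF assms] by blast
  obtain u0 where "u0 \<in> C" "ereal (f u0) < ereal z" using z(1) by (auto simp: INF_less_iff)
  moreover have "\<not> P u" if "u \<in> C" "f u < z" for u
  proof
    assume "P u"
    hence "(INF u\<in>{u\<in>C. P u}. ereal (f u)) \<le> ereal (f u)" using that by (auto intro: INF_lower)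
    moreover have "ereal (f u) < ereal z" using that by simp
    ultimately have "(INF u\<in>{u\<in>C. P u}. ereal (f u)) < ereal z" by (rule order.strict_trans1)
    thus False using z(2) by (meson order.asym)
  qed
  ultimately show ?thesis by auto
qed

lemma inner_bound:
  fixes x z :: "real^'n"
  assumes "\<forall>y. 0 \<le> z$y"
  shows "\<bar>x \<bullet> z\<bar> \<le> norm x * (\<Sum>y\<in>UNIV. z$y)"
proof -
  have "\<bar>x \<bullet> z\<bar> = \<bar>\<Sum>y\<in>UNIV. x$y * z$y\<bar>" by (simp add: inner_vec_def)
  also have "\<dots> \<le> (\<Sum>y\<in>UNIV. \<bar>x$y * z$y\<bar>)" by (rule sum_abs)
  also have "\<dots> \<le> (\<Sum>y\<in>UNIV. norm x * z$y)"
    by (rule sum_mono) (use assms component_le_norm_cart in \<open>auto simp: abs_mult intro: mult_right_mono\<close>)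
  finally show ?thesis by (simp add: sum_distrib_left)
qed

lemma disjoint_argmin:
  fixes L :: "nat \<Rightarrow> real^'n" and v :: "real^'n"
  assumes sums: "\<forall>t\<in>{1..k}. (\<Sum>y\<in>UNIV. L t $ y) = (\<Sum>y\<in>UNIV. L 1 $ y)"
    and v: "v \<in> span ((\<lambda>x. x - L 1) ` L ` {1..k})" "v \<noteq> 0" and rho: "\<rho> > 0"
  shows "argmin_loss k L (\<chi> y. 1 / real CARD('n) + \<rho> * v$y) \<inter>
         argmin_loss k L (\<chi> y. 1 / real CARD('n) + (-\<rho>) * v$y) = {}"
proof (rule ccontr)
  assume "\<not> ?thesis"
  then obtain t where t: "t \<in> {1..k}"
    and h1: "\<forall>t'\<in>{1..k}. (\<chi> y. 1 / real CARD('n) + \<rho> * v$y) \<bullet> L t \<le> (\<chi> y. 1 / real CARD('n) + \<rho> * v$y) \<bullet> L t'"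
    and h2: "\<forall>t'\<in>{1..k}. (\<chi> y. 1 / real CARD('n) + (-\<rho>) * v$y) \<bullet> L t \<le> (\<chi> y. 1 / real CARD('n) + (-\<rho>) * v$y) \<bullet> L t'"
    unfolding argmin_loss_def by blast
  have ip: "(\<chi> y. 1 / real CARD('n) + s * v$y) \<bullet> w = (1 / real CARD('n)) * (\<Sum>y\<in>UNIV. w$y) + s * (v \<bullet> w)"
    for s and w :: "real^'n"
    by (simp add: inner_vec_def algebra_simps sum.distrib sum_distrib_left sum_divide_distrib)
  have z: "v \<bullet> (L t - L t') = 0" if t': "t' \<in> {1..k}" for t'
  proof -
    have "(\<Sum>y\<in>UNIV. L t $ y) = (\<Sum>y\<in>UNIV. L t' $ y)"
      using sums[rule_format, OF t] sums[rule_format, OF t'] by linarith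
    moreover have "(1 / real CARD('n)) * (\<Sum>y\<in>UNIV. L t $ y) + \<rho> * (v \<bullet> L t) \<le> (1 / real CARD('n)) * (\<Sum>y\<in>UNIV. L t' $ y) + \<rho> * (v \<bullet> L t')"
      using h1[rule_format, OF t'] by (simp only: ip)
    moreover have "(1 / real CARD('n)) * (\<Sum>y\<in>UNIV. L t $ y) + (-\<rho>) * (v \<bullet> L t) \<le> (1 / real CARD('n)) * (\<Sum>y\<in>UNIV. L t' $ y) + (-\<rho>) * (v \<bullet> L t')"
      using h2[rule_format, OF t'] by (simp only: ip)
    ultimately have "\<rho> * (v \<bullet> L t) = \<rho> * (v \<bullet> L t')"
      by (simp only: mult_minus_left)
    thus ?thesis using rho by (simp add: inner_diff_right)
  qed
  have "(\<lambda>x. x - L 1) ` L ` {1..k} \<subseteq> {x. v \<bullet> x = 0}"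
  proof
    fix x assume "x \<in> (\<lambda>x. x - L 1) ` L ` {1..k}"
    then obtain t' where t': "t' \<in> {1..k}" "x = L t' - L 1" by auto
    have "1 \<in> {1..k}" using t by auto
    hence "v \<bullet> (L t - L 1) = 0" "v \<bullet> (L t - L t') = 0" using z t' by auto
    thus "x \<in> {x. v \<bullet> x = 0}" using t' by (simp add: inner_diff_right)
  qed
  moreover have "subspace {x. v \<bullet> x = 0}"
    by (auto simp: subspace_def inner_add_right)
  ultimately have "v \<in> {x. v \<bullet> x = 0}" using v(1) span_minimal by blast
  thus False using v(2) by simp
qed

theorem mainTheorem15:
  fixes k :: nat and L :: "nat \<Rightarrow> real^'n"
  assumes "loss_matrix k L"
    and "standing_assumption k L"
    and "\<forall>t1\<in>{1..k}. \<forall>t2\<in>{1..k}. \<exists>\<sigma>. \<sigma> permutes (UNIV :: 'n set) \<and>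
            (\<forall>y. L t2 $ y = L t1 $ \<sigma> y)"
  shows "\<forall>d. CCdim k L = enat d \<longrightarrow> affdim k L - 1 \<le> int d"
proof (intro allI impI)
  fix d assume cd: "CCdim k L = enat d"
  have ex: "\<exists>d. CC_admissible k L d" using cd unfolding CCdim_def by (auto split: if_splits)
  hence "d = (LEAST d. CC_admissible k L d)" using cd unfolding CCdim_def by auto
  hence adm: "CC_admissible k L d" using LeastI_ex[OF ex] by simp
  show "affdim k L - 1 \<le> int d"
  proof (cases "k = 0")
    case True thus ?thesis by (simp add: affdim_def)
  next
    case knz: False
    have "affdim k L \<le> int d"
    proof (cases "CARD('n) \<le> d")
      case True
      have "affdim k L \<le> int DIM(real^'n)" unfolding affdim_def by (rule aff_dim_le_DIM)
      thus ?thesis using True by simp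
    next
      case False
      hence dlt: "d < CARD('n)" by simp
      define V where "V = span ((\<lambda>x. x - L 1) ` L ` {1..k})"
      have one: "1 \<in> {1..k}" using knz by simp
      have affV: "affdim k L = int (dim V)"
        unfolding affdim_def V_def dim_span
        by (rule aff_dim_eq_dim_subtract) (use one in \<open>auto intro: hull_inc\<close>)
      have "dim V \<le> d"
      proof (rule ccontr)
        assume "\<not> dim V \<le> d"
        hence dV: "d < dim V" by simp
        show False
        proof -
        obtain C and \<psi> :: "(nat \<Rightarrow> real) \<Rightarrow> real^'n" where
          Cset: "convex_set_in d C" and psi: "convex_surrogate C \<psi>" and cal: "calibrated k L C \<psi>"
          using adm unfolding CC_admissible_def by blast
        obtain pred where predC: "\<forall>u\<in>C. pred u \<in> {1..k}" and
          calq: "\<forall>q\<in>prob_simplex. (INF u\<in>C. ereal (q \<bullet> \<psi> u))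
                 < (INF u\<in>{u\<in>C. pred u \<notin> argmin_loss k L q}. ereal (q \<bullet> \<psi> u))"
          using cal unfolding calibrated_def by blast
        define N where "N = real CARD('n)"
        have N1: "N \<ge> 1" unfolding N_def by simp
        have sums: "\<forall>t\<in>{1..k}. (\<Sum>y\<in>UNIV. L t $ y) = (\<Sum>y\<in>UNIV. L 1 $ y)"
        proof
          fix t assume t: "t \<in> {1..k}"
          obtain \<sigma> where \<sigma>: "\<sigma> permutes (UNIV :: 'n set)" "\<forall>y. L t $ y = L 1 $ \<sigma> y"
            using assms(3) one t by blast
          have "(\<Sum>y\<in>UNIV. L 1 $ y) = (\<Sum>y\<in>UNIV. ((\<lambda>y. L 1 $ y) \<circ> \<sigma>) y)"
            by (rule sum.permute[OF \<sigma>(1)])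
          thus "(\<Sum>y\<in>UNIV. L t $ y) = (\<Sum>y\<in>UNIV. L 1 $ y)" using \<sigma>(2) by simp
        qed
        have subV: "subspace V" unfolding V_def by simp
        have sum0: "\<forall>v\<in>V. (\<Sum>y\<in>UNIV. v$y) = 0"
        proof -
          have "subspace {v::real^'n. (\<Sum>y\<in>UNIV. v$y) = 0}"
            by (auto simp: subspace_def sum.distrib sum_distrib_left[symmetric])
          moreover have "(\<lambda>x. x - L 1) ` L ` {1..k} \<subseteq> {v::real^'n. (\<Sum>y\<in>UNIV. v$y) = 0}"
          proof
            fix x assume "x \<in> (\<lambda>x. x - L 1) ` L ` {1..k}"
            then obtain t where t: "t \<in> {1..k}" "x = L t - L 1" by auto
            have "(\<Sum>y\<in>UNIV. L t $ y) = (\<Sum>y\<in>UNIV. L 1 $ y)" by (rule sums[rule_format, OF t(1)])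
            thus "x \<in> {v::real^'n. (\<Sum>y\<in>UNIV. v$y) = 0}" using t(2) by (simp add: sum_subtractf)
          qed
          ultimately show ?thesis unfolding V_def using span_minimal by blast
        qed
        have Cne: "C \<noteq> {}"
        proof
          assume "C = {}"
          moreover have "((\<chi> y. 1 / N) :: real^'n) \<in> prob_simplex" unfolding prob_simplex_def N_def by simp
          ultimately show False using calq[rule_format, of "(\<chi> y. 1 / N) :: real^'n"] by simp
        qed
        obtain g where g: "bij_betw g {0..<CARD('n)} (UNIV :: 'n set)"
          using ex_bij_betw_nat_finite[of "UNIV :: 'n set"] by auto
        have ginj: "inj_on g {..<d}"
          by (rule inj_on_subset[OF bij_betw_imp_inj_on[OF g]]) (use dlt in auto)
        define Emb :: "(nat \<Rightarrow> real) \<Rightarrow> real^'n" where "Emb u = (\<Sum>i<d. u i *\<^sub>R axis (g i) 1)" for u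
        define Inv :: "real^'n \<Rightarrow> (nat \<Rightarrow> real)" where "Inv x = (\<lambda>i. if i < d then x $ g i else 0)" for x
        have EI: "Inv (Emb u) = u" if "\<forall>i\<ge>d. u i = 0" for u
        proof
          fix j show "Inv (Emb u) j = u j"
          proof (cases "j < d")
            case True
            have "Emb u $ g j = (\<Sum>i<d. if i = j then u i else 0)"
              unfolding Emb_def sum_component
              by (rule sum.cong) (use True ginj in \<open>auto simp: axis_def inj_on_def\<close>)
            thus ?thesis using True by (simp add: Inv_def)
          next
            case False thus ?thesis using that by (simp add: Inv_def)
          qed
        qed
        have Elin: "Emb (\<lambda>i. a * u i + b * v i) = a *\<^sub>R Emb u + b *\<^sub>R Emb v" for a b u v
          unfolding Emb_def by (simp add: scaleR_add_left sum.distrib scaleR_sum_right)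
        have Csupp: "\<forall>u\<in>C. \<forall>i\<ge>d. u i = 0" using Cset unfolding convex_set_in_def by blast
        have Cconv: "\<forall>u\<in>C. \<forall>v\<in>C. \<forall>\<theta>::real. 0 \<le> \<theta> \<and> \<theta> \<le> 1 \<longrightarrow> (\<lambda>i. \<theta> * u i + (1 - \<theta>) * v i) \<in> C"
          using Cset unfolding convex_set_in_def by blast
        define C' where "C' = Emb ` C"
        define \<psi>' where "\<psi>' = \<psi> \<circ> Inv"
        have psiE: "\<psi>' (Emb c) = \<psi> c" if "c \<in> C" for c
          using EI Csupp that unfolding \<psi>'_def by simp
        have InvC': "Inv u \<in> C" "\<psi>' u = \<psi> (Inv u)" if "u \<in> C'" for u
          using that EI Csupp unfolding C'_def \<psi>'_def by auto
        have combC': "\<theta> *\<^sub>R a + (1 - \<theta>) *\<^sub>R b \<in> C' \<and>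
            \<psi>' (\<theta> *\<^sub>R a + (1 - \<theta>) *\<^sub>R b) = \<psi> (\<lambda>i. \<theta> * Inv a i + (1 - \<theta>) * Inv b i)"
          if abC: "a \<in> C'" "b \<in> C'" and thh: "0 \<le> \<theta>" "\<theta> \<le> 1" for a b and \<theta> :: real
        proof -
          obtain ua ub where u: "ua \<in> C" "ub \<in> C" "a = Emb ua" "b = Emb ub"
            using abC unfolding C'_def by (metis imageE)
          have cm: "(\<lambda>i. \<theta> * ua i + (1 - \<theta>) * ub i) \<in> C" using Cconv u thh by blast
          have eq: "\<theta> *\<^sub>R a + (1 - \<theta>) *\<^sub>R b = Emb (\<lambda>i. \<theta> * ua i + (1 - \<theta>) * ub i)"
            using u Elin by simp
          have ia: "Inv a = ua" unfolding u(3) by (rule EI[OF bspec[OF Csupp u(1)]])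
          have ib: "Inv b = ub" unfolding u(4) by (rule EI[OF bspec[OF Csupp u(2)]])
          show ?thesis unfolding eq ia ib using cm psiE[OF cm] unfolding C'_def by simp
        qed
        have convC': "convex C'"
          unfolding convex_def
        proof (intro ballI allI impI)
          fix a b and s t :: real assume "a \<in> C'" "b \<in> C'" "0 \<le> s" "0 \<le> t" "s + t = 1"
          thus "s *\<^sub>R a + t *\<^sub>R b \<in> C'" using combC'[of a b s] by (simp add: eq_diff_eq[symmetric] add.commute)
        qed
        have C'ne: "C' \<noteq> {}" using Cne unfolding C'_def by simp
        have psi1: "\<And>u y. u \<in> C \<Longrightarrow> 0 \<le> \<psi> u $ y"
          using psi unfolding convex_surrogate_def by blast
        have psi2: "\<And>y u v \<theta>. u \<in> C \<Longrightarrow> v \<in> C \<Longrightarrow> 0 \<le> \<theta> \<Longrightarrow> \<theta> \<le> 1 \<Longrightarrow>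
            \<psi> (\<lambda>i. \<theta> * u i + (1 - \<theta>) * v i) $ y \<le> \<theta> * \<psi> u $ y + (1 - \<theta>) * \<psi> v $ y"
          using psi unfolding convex_surrogate_def by blast
        have nonneg': "\<forall>x\<in>C'. \<forall>y. 0 \<le> \<psi>' x $ y"
        proof (intro ballI allI)
          fix x y assume "x \<in> C'"
          thus "0 \<le> \<psi>' x $ y" using InvC'[of x] psi1[of "Inv x" y] by simp
        qed
        have cvx': "\<forall>y. \<forall>a\<in>C'. \<forall>b\<in>C'. \<forall>\<theta>. 0 \<le> \<theta> \<and> \<theta> \<le> 1 \<longrightarrow>
           \<psi>' (\<theta> *\<^sub>R a + (1-\<theta>) *\<^sub>R b) $ y \<le> \<theta> * \<psi>' a $ y + (1-\<theta>) * \<psi>' b $ y"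
        proof (intro allI ballI impI)
          fix y a b and \<theta> :: real assume ab: "a \<in> C'" "b \<in> C'" and th: "0 \<le> \<theta> \<and> \<theta> \<le> 1"
          have "\<psi> (\<lambda>i. \<theta> * Inv a i + (1 - \<theta>) * Inv b i) $ y \<le> \<theta> * \<psi> (Inv a) $ y + (1 - \<theta>) * \<psi> (Inv b) $ y"
            using psi2[OF InvC'(1)[OF ab(1)] InvC'(1)[OF ab(2)]] th by blast
          thus "\<psi>' (\<theta> *\<^sub>R a + (1-\<theta>) *\<^sub>R b) $ y \<le> \<theta> * \<psi>' a $ y + (1-\<theta>) * \<psi>' b $ y"
            using combC'[OF ab] th InvC'[OF ab(1)] InvC'[OF ab(2)] by simp
        qed
        define Sd where "Sd = span ((\<lambda>i. axis (g i) (1::real)) ` {..<d})"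
        have subSd: "subspace Sd" unfolding Sd_def by simp
        have C'Sd: "C' \<subseteq> Sd"
        proof
          fix x assume "x \<in> C'"
          then obtain u where xu: "x = Emb u" unfolding C'_def by auto
          have "(\<Sum>i<d. u i *\<^sub>R axis (g i) (1::real)) \<in> span ((\<lambda>i. axis (g i) (1::real)) ` {..<d})"
            by (rule span_sum, rule span_scale, rule span_base) simp
          thus "x \<in> Sd" unfolding Sd_def xu Emb_def .
        qed
        have dimSd: "dim Sd \<le> d"
        proof -
          have "dim Sd \<le> card ((\<lambda>i. axis (g i) (1::real)) ` {..<d})"
            unfolding Sd_def by (rule dim_le_card) auto
          also have "\<dots> \<le> d" using card_image_le[of "{..<d}"] by simp
          finally show ?thesis .
        qed
        define F where "F c = (\<Sum>y\<in>UNIV. \<psi> c $ y)" for c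
        define \<mu> where "\<mu> = Inf (F ` C)"
        have Fnn: "F c \<ge> 0" if "c \<in> C" for c
          using psi1 that unfolding F_def by (simp add: sum_nonneg)
        have bddF: "bdd_below (F ` C)" using Fnn by (intro bdd_belowI[of _ 0]) auto
        have mulow: "\<forall>c\<in>C'. \<mu> \<le> (\<Sum>y\<in>UNIV. \<psi>' c $ y)"
          using InvC' cInf_lower[OF _ bddF] unfolding \<mu>_def F_def by auto
        have muinf: "\<forall>e>0. \<exists>c\<in>C'. (\<Sum>y\<in>UNIV. \<psi>' c $ y) < \<mu> + e"
        proof (intro allI impI)
          fix e :: real assume "e > 0"
          hence "Inf (F ` C) < \<mu> + e" unfolding \<mu>_def by simp
          then obtain x where "x \<in> F ` C" "x < \<mu> + e" using cInf_lessD[of "F ` C"] Cne by blast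
          then obtain c where "c \<in> C" "F c < \<mu> + e" by auto
          thus "\<exists>c\<in>C'. (\<Sum>y\<in>UNIV. \<psi>' c $ y) < \<mu> + e"
            using psiE unfolding C'_def F_def by (intro bexI[of _ "Emb c"]) auto
        qed
        have dimlt: "dim Sd < dim V" using dimSd dV by simp
        define P where "P j u v \<longleftrightarrow> norm v = 1 \<and> (\<Sum>y\<in>UNIV. \<psi>' u $ y) \<le> \<mu> + inverse (real (Suc j)) \<and>
           (\<forall>t. (\<forall>y. 0 \<le> 1 / real CARD('n) + t * v$y) \<longrightarrow>
            (\<forall>u'\<in>C'. (\<chi> y. 1 / real CARD('n) + t * v$y) \<bullet> \<psi>' u
              \<le> (\<chi> y. 1 / real CARD('n) + t * v$y) \<bullet> \<psi>' u' + 2 * inverse (real (Suc j))))" for j u v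
        have "\<forall>j. \<exists>u. u \<in> C' \<and> (\<exists>v. v \<in> V \<and> P j u v)"
        proof
          fix j
          show "\<exists>u. u \<in> C' \<and> (\<exists>v. v \<in> V \<and> P j u v)"
            using key[OF convC' C'ne nonneg' cvx' subSd C'Sd subV dimlt sum0 mulow muinf,
                of "inverse (real (Suc j))"] unfolding P_def by auto
        qed
        then obtain U where U: "\<forall>j. U j \<in> C' \<and> (\<exists>v. v \<in> V \<and> P j (U j) v)"
          by (rule choice[THEN exE]) blast
        then obtain W where W: "\<forall>j. W j \<in> V \<and> P j (U j) (W j)"
          by (metis choice)
        have compK: "compact (sphere (0::real^'n) 1 \<inter> V)"
          by (rule compact_Int_closed[OF compact_sphere closed_subspace[OF subV]])
        have WK: "\<forall>j. W j \<in> sphere 0 1 \<inter> V" using W unfolding P_def by auto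
        obtain l r where l: "l \<in> sphere 0 1 \<inter> V" and r: "strict_mono r" and lim: "(W \<circ> r) \<longlonglongrightarrow> l"
          using compK WK unfolding compact_def by metis
        have lV: "l \<in> V" and ln: "norm l = 1" using l by auto
        define \<rho> where "\<rho> = 1 / N"
        have rho: "\<rho> > 0" "\<rho> \<le> 1" using N1 unfolding \<rho>_def by auto
        define q where "q s = (\<chi> y. 1 / real CARD('n) + s * l$y)" for s
        have qnn: "0 \<le> 1 / real CARD('n) + s * w$y" if "\<bar>s\<bar> \<le> \<rho>" "norm w \<le> 1" for s and w :: "real^'n" and y
        proof -
          have "\<bar>s * w$y\<bar> \<le> \<rho> * 1"
            unfolding abs_mult using that component_le_norm_cart[of w y] rho
            by (intro mult_mono) auto
          thus ?thesis unfolding \<rho>_def N_def by linarith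
        qed
        have claim: "\<exists>M. \<forall>j\<ge>M. pred (Inv (U (r j))) \<in> argmin_loss k L (q s)" if s: "\<bar>s\<bar> = \<rho>" for s
        proof -
          have qS: "q s \<in> prob_simplex"
            unfolding prob_simplex_def q_def using qnn[of s l] s ln sum0 lV
            by (simp add: sum.distrib sum_distrib_left[symmetric])
          obtain r0 where r0: "\<exists>u0\<in>C. q s \<bullet> \<psi> u0 < r0"
            and good: "\<forall>u\<in>C. q s \<bullet> \<psi> u < r0 \<longrightarrow> pred u \<in> argmin_loss k L (q s)"
            using cal_threshold[OF calq[rule_format, OF qS]] by blast
          then obtain u0 where u0: "u0 \<in> C" "q s \<bullet> \<psi> u0 < r0" by blast
          define \<gamma> where "\<gamma> = r0 - q s \<bullet> \<psi> u0"
          have ga: "\<gamma> > 0" unfolding \<gamma>_def using u0 by simp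
          define K where "K = \<mu> + 1 + F u0"
          have K: "K \<ge> 1"
          proof -
            have "\<mu> \<ge> 0" unfolding \<mu>_def using Fnn Cne by (auto intro: cInf_greatest)
            thus ?thesis unfolding K_def using Fnn[OF u0(1)] by simp
          qed
          obtain M0 where M0: "\<forall>j\<ge>M0. norm ((W \<circ> r) j - l) < \<gamma> / (2 * K)"
            using lim ga K unfolding LIMSEQ_iff by (metis divide_pos_pos mult_pos_pos zero_less_numeral
                  less_le_trans zero_less_one)
          obtain M1 where M1: "inverse (real (Suc M1)) < \<gamma> / 8"
            using reals_Archimedean[of "\<gamma>/8"] ga by auto
          have "pred (Inv (U (r j))) \<in> argmin_loss k L (q s)" if j: "j \<ge> max M0 M1" for j
          proof -
            define w where "w = W (r j)"
            define u where "u = U (r j)"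
            define \<epsilon> where "\<epsilon> = inverse (real (Suc (r j)))"
            have uC': "u \<in> C'" using U unfolding u_def by auto
            have Pj: "P (r j) u w" using W unfolding u_def w_def by auto
            have wn: "norm w = 1" using Pj unfolding P_def by auto
            have eps: "\<epsilon> < \<gamma> / 8"
            proof -
              have "r j \<ge> M1" using seq_suble[OF r, of j] j by simp
              hence "\<epsilon> \<le> inverse (real (Suc M1))" unfolding \<epsilon>_def
                by (intro le_imp_inverse_le) auto
              thus ?thesis using M1 by simp
            qed
            have dw: "norm (w - l) < \<gamma> / (2 * K)" using M0 j unfolding w_def by auto
            define qw where "qw = (\<chi> y. 1 / real CARD('n) + s * w$y)"
            have opt: "qw \<bullet> \<psi>' u \<le> qw \<bullet> \<psi>' (Emb u0) + 2 * \<epsilon>"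
              using Pj qnn[of s w] s wn u0(1) unfolding P_def qw_def \<epsilon>_def C'_def by auto
            have c: "Inv u \<in> C" "\<psi>' u = \<psi> (Inv u)" using InvC'[OF uC'] by auto
            have Fc: "F (Inv u) \<le> \<mu> + 1"
            proof -
              have "F (Inv u) \<le> \<mu> + \<epsilon>" using Pj c unfolding P_def F_def \<epsilon>_def by simp
              moreover have "\<epsilon> \<le> 1" unfolding \<epsilon>_def by (simp add: inverse_le_1_iff)
              ultimately show ?thesis by simp
            qed
            have diff: "q s - qw = s *\<^sub>R (l - w)" unfolding q_def qw_def by (simp add: vec_eq_iff algebra_simps)
            have nd: "norm (q s - qw) \<le> norm (w - l)"
              unfolding diff using s rho by (simp add: norm_minus_commute mult_left_le_one_le)
            have b1: "\<bar>(q s - qw) \<bullet> \<psi> (Inv u)\<bar> \<le> norm (w - l) * F (Inv u)"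
            proof -
              have "\<bar>(q s - qw) \<bullet> \<psi> (Inv u)\<bar> \<le> norm (q s - qw) * F (Inv u)"
                unfolding F_def by (rule inner_bound) (use psi1 c in auto)
              also have "\<dots> \<le> norm (w - l) * F (Inv u)" using nd Fnn[OF c(1)] by (rule mult_right_mono)
              finally show ?thesis .
            qed
            have b2: "\<bar>(q s - qw) \<bullet> \<psi> u0\<bar> \<le> norm (w - l) * F u0"
            proof -
              have "\<bar>(q s - qw) \<bullet> \<psi> u0\<bar> \<le> norm (q s - qw) * F u0"
                unfolding F_def by (rule inner_bound) (use psi1 u0 in auto)
              also have "\<dots> \<le> norm (w - l) * F u0" using nd Fnn[OF u0(1)] by (rule mult_right_mono)
              finally show ?thesis .
            qed
            have "norm (w - l) * F (Inv u) + norm (w - l) * F u0 \<le> norm (w - l) * K"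
              using Fc unfolding K_def by (simp add: distrib_left[symmetric] mult_left_mono)
            also have "\<dots> \<le> (\<gamma> / (2 * K)) * K" using dw K by (intro mult_right_mono) auto
            also have "\<dots> = \<gamma> / 2" using K by simp
            finally have bb: "norm (w - l) * F (Inv u) + norm (w - l) * F u0 \<le> \<gamma> / 2" .
            have e1: "q s \<bullet> \<psi> (Inv u) = qw \<bullet> \<psi> (Inv u) + (q s - qw) \<bullet> \<psi> (Inv u)"
              by (simp add: inner_diff_left)
            have e2: "qw \<bullet> \<psi> u0 = q s \<bullet> \<psi> u0 - (q s - qw) \<bullet> \<psi> u0"
              by (simp add: inner_diff_left)
            have "q s \<bullet> \<psi> (Inv u) < r0"
            proof -
              have opt': "qw \<bullet> \<psi> (Inv u) \<le> qw \<bullet> \<psi> u0 + 2 * \<epsilon>"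
                using opt c(2) psiE[OF u0(1)] by simp
              have "(q s - qw) \<bullet> \<psi> (Inv u) \<le> norm (w - l) * F (Inv u)" using b1 by (rule abs_le_D1)
              moreover have "- ((q s - qw) \<bullet> \<psi> u0) \<le> norm (w - l) * F u0" using b2 by (rule abs_le_D2)
              ultimately have s3: "q s \<bullet> \<psi> (Inv u) \<le> q s \<bullet> \<psi> u0 + 2 * \<epsilon> + (norm (w - l) * F (Inv u) + norm (w - l) * F u0)"
                using e1 e2 opt' by linarith
              have "2 * \<epsilon> + (norm (w - l) * F (Inv u) + norm (w - l) * F u0) < \<gamma>"
                using bb eps ga by linarith
              thus ?thesis using s3 unfolding \<gamma>_def by linarith
            qed
            thus ?thesis using good c(1) unfolding u_def by blast
          qed
          thus ?thesis by blast
        qed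
        obtain M1 where M1: "\<forall>j\<ge>M1. pred (Inv (U (r j))) \<in> argmin_loss k L (q \<rho>)"
          using claim[of \<rho>] rho by auto
        obtain M2 where M2: "\<forall>j\<ge>M2. pred (Inv (U (r j))) \<in> argmin_loss k L (q (-\<rho>))"
          using claim[of "-\<rho>"] rho by auto
        have "l \<noteq> 0" using ln by auto
        hence "argmin_loss k L (q \<rho>) \<inter> argmin_loss k L (q (-\<rho>)) = {}"
          unfolding q_def using disjoint_argmin[OF sums, of l \<rho>] lV rho unfolding V_def by auto
        thus False using M1[rule_format, of "max M1 M2"] M2[rule_format, of "max M1 M2"] by auto
        qed
      qed
      thus ?thesis using affV by simp
    qed
    thus ?thesis by simp
  qed
qed
end
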